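(* Let $\emptyset\neq S\subseteq\mathbb{S}$. The following assertions are equivalent: (i) $S$ is s-convex; (ii) for all $x_1,x_2\in\mathbb{P}S$ one has $x_1+x_2\in\mathbb{P}S$; (iii) $\mathbb{P}S$ is convex; (iv) $\mathbb{R}_+S$ is a pointed convex cone; (v) there exists a pointed convex cone $K\subseteq\mathbb{R}^n$ such that $S=K\cap\mathbb{S}$; (vi) there exists a convex set $C\subseteq\mathbb{R}^n$ such that $S=\rho(C)$; (vii) there exists a bounded convex set $C\subseteq\mathbb{R}^n$ such that $S=\rho(C)$; (viii) $S=\rho(\operatorname{conv}S)$. If, moreover, $\Phi$ is convex, then (i) is also equivalent to: (ix) $(0,1]\,S$ is convex.
   Context: Standing setting: $n\ge 2$; $\mathbb{R}^n$ carries the usual inner product $\langle\cdot,\cdot\rangle$ and Euclidean norm; $o$ denotes the zero vector. $\Phi:\mathbb{R}^n\to\mathbb{R}_+:=[0,\infty)$ is a continuous function with $\Phi(tx)=t\Phi(x)$ for all $x\in\mathbb{R}^n$, $t\ge 0$, and $\Phi(x)=0$ iff $x=o$. Set $\mathbb{S}:=\{x\in\mathbb{R}^n\mid \Phi(x)=1\}$ (with the topology induced from $\mathbb{R}^n$), $\mathbb{P}:=(0,\infty)$, and $\rho:\mathbb{R}^n\to\{o\}\cup\mathbb{S}$, $\rho(x):=x/\Phi(x)$ for $x\neq o$, $\rho(o):=o$. For $\emptyset\ne\Gamma\subseteq\mathbb{R}$ and $\emptyset\ne A\subseteq\mathbb{R}^n$, $\Gamma A:=\{\gamma a\mid \gamma\in\Gamma,\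 a\in A\}$. For $x,y\in\mathbb{S}$ and $\lambda\in[0,1]$, $\lambda x+_s(1-\lambda)y:=\rho(\lambda x+(1-\lambda)y)$. A nonempty set $S\subseteq\mathbb{S}$ is called s-convex if $\lambda x+_s(1-\lambda)y\in S$ for all $x,y\in S$ and $\lambda\in[0,1]$. A cone $K\subseteq\mathbb{R}^n$ is pointed if $K\cap(-K)=\{o\}$. $\operatorname{conv}$ denotes the convex hull. *)

theory Defs
  imports "HOL-Analysis.Analysis"
begin

definition admissible_Phi :: "('a::euclidean_space \<Rightarrow> real) \<Rightarrow> bool" where
  "admissible_Phi \<Phi> \<longleftrightarrow> continuous_on UNIV \<Phi> \<and> (\<forall>x. \<Phi> x \<ge> 0) \<and>
     (\<forall>x. \<forall>t\<ge>0. \<Phi> (t *\<^sub>R x) = t * \<Phi> x) \<and> (\<forall>x. \<Phi> x = 0 \<longleftrightarrow> x = 0)"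

definition unitS :: "('a::euclidean_space \<Rightarrow> real) \<Rightarrow> 'a set" where
  "unitS \<Phi> = {x. \<Phi> x = 1}"

definition rho :: "('a::euclidean_space \<Rightarrow> real) \<Rightarrow> 'a \<Rightarrow> 'a" where
  "rho \<Phi> x = (if x = 0 then 0 else (1 / \<Phi> x) *\<^sub>R x)"

definition s_comb :: "('a::euclidean_space \<Rightarrow> real) \<Rightarrow> real \<Rightarrow> 'a \<Rightarrow> 'a \<Rightarrow> 'a" where
  "s_comb \<Phi> l x y = rho \<Phi> (l *\<^sub>R x + (1 - l) *\<^sub>R y)"

definition s_convex :: "('a::euclidean_space \<Rightarrow> real) \<Rightarrow> 'a set \<Rightarrow> bool" where
  "s_convex \<Phi> S \<longleftrightarrow> S \<noteq> {} \<and> S \<subseteq> unitS \<Phi> \<and>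
     (\<forall>x\<in>S. \<forall>y\<in>S. \<forall>l\<in>{0..1}. s_comb \<Phi> l x y \<in> S)"

definition setscale :: "real set \<Rightarrow> 'a::real_vector set \<Rightarrow> 'a set" where
  "setscale \<Gamma> A = {\<gamma> *\<^sub>R a | \<gamma> a. \<gamma> \<in> \<Gamma> \<and> a \<in> A}"

definition pointed_cone :: "'a::real_vector set \<Rightarrow> bool" where
  "pointed_cone K \<longleftrightarrow> cone K \<and> K \<inter> uminus ` K = {0}"

end

theory Submission
  imports Defs
begin

lemma adm_hom: "admissible_Phi \<Phi> \<Longrightarrow> t \<ge> 0 \<Longrightarrow> \<Phi> (t *\<^sub>R x) = t * \<Phi> x"
  unfolding admissible_Phi_def by blast

lemma adm_pos: "admissible_Phi \<Phi> \<Longrightarrow> x \<noteq> 0 \<Longrightarrow> \<Phi> x > 0"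
  unfolding admissible_Phi_def by (metis less_eq_real_def)

lemma adm_zero: "admissible_Phi \<Phi> \<Longrightarrow> \<Phi> 0 = 0"
  unfolding admissible_Phi_def by blast

lemma rho_zero: "rho \<Phi> 0 = 0" by (simp add: rho_def)

lemma unit_nz: "admissible_Phi \<Phi> \<Longrightarrow> s \<in> unitS \<Phi> \<Longrightarrow> s \<noteq> 0"
  using adm_zero by (force simp: unitS_def)

lemma rho_cmul:
  assumes "admissible_Phi \<Phi>" "c > 0"
  shows "rho \<Phi> (c *\<^sub>R z) = rho \<Phi> z"
proof (cases "z = 0")
  case False
  have "\<Phi> (c *\<^sub>R z) = c * \<Phi> z" using adm_hom[OF assms(1), of c] assms(2) by simp
  moreover have "\<Phi> z > 0" using adm_pos assms False by blast
  ultimately show ?thesis using False assms by (simp add: rho_def)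
qed (simp add: rho_def)

lemma rho_unitS: "admissible_Phi \<Phi> \<Longrightarrow> s \<in> unitS \<Phi> \<Longrightarrow> rho \<Phi> s = s"
  using unit_nz by (force simp: rho_def unitS_def)

lemma rho_decomp:
  assumes "admissible_Phi \<Phi>" "z \<noteq> 0"
  shows "rho \<Phi> z \<in> unitS \<Phi>" "z = \<Phi> z *\<^sub>R rho \<Phi> z"
proof -
  have p: "\<Phi> z > 0" using adm_pos assms by blast
  have "\<Phi> (rho \<Phi> z) = (1 / \<Phi> z) * \<Phi> z" using adm_hom[OF assms(1)] p assms(2)
    by (simp add: rho_def)
  then show "rho \<Phi> z \<in> unitS \<Phi>" using p by (simp add: unitS_def)
  show "z = \<Phi> z *\<^sub>R rho \<Phi> z" using p assms(2) by (simp add: rho_def)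
qed

lemma P_char:
  assumes "admissible_Phi \<Phi>" "S \<subseteq> unitS \<Phi>"
  shows "z \<in> setscale {0<..} S \<longleftrightarrow> z \<noteq> 0 \<and> rho \<Phi> z \<in> S"
proof
  assume "z \<in> setscale {0<..} S"
  then obtain t s where z: "z = t *\<^sub>R s" "t > 0" "s \<in> S" by (auto simp: setscale_def)
  have "s \<noteq> 0" using unit_nz assms z by blast
  have "s \<in> unitS \<Phi>" using assms z by blast
  then have "rho \<Phi> s = s" using rho_unitS assms by blast
  then show "z \<noteq> 0 \<and> rho \<Phi> z \<in> S" using z rho_cmul[OF assms(1) z(2)] \<open>s \<noteq> 0\<close> by auto
next
  assume a: "z \<noteq> 0 \<and> rho \<Phi> z \<in> S"
  then have "z = \<Phi> z *\<^sub>R rho \<Phi> z" "\<Phi> z > 0" using rho_decomp adm_pos assms by auto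
  then show "z \<in> setscale {0<..} S" using a by (auto simp: setscale_def)
qed

lemma P_scale:
  assumes "admissible_Phi \<Phi>" "S \<subseteq> unitS \<Phi>" "c > 0" "z \<in> setscale {0<..} S"
  shows "c *\<^sub>R z \<in> setscale {0<..} S"
proof -
  have "z \<noteq> 0" "rho \<Phi> z \<in> S" using assms(4) P_char[OF assms(1,2)] by blast+
  then have "c *\<^sub>R z \<noteq> 0" "rho \<Phi> (c *\<^sub>R z) \<in> S" using assms(3) rho_cmul[OF assms(1,3)] by auto
  then show ?thesis using P_char[OF assms(1,2)] by blast
qed

lemma S_sub_P:
  assumes "admissible_Phi \<Phi>" "S \<subseteq> unitS \<Phi>"
  shows "S \<subseteq> setscale {0<..} S"
proof
  fix s assume "s \<in> S"
  then have "s \<in> unitS \<Phi>" using assms by blast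
  then have "s \<noteq> 0" "rho \<Phi> s = s" using rho_unitS unit_nz assms(1) by blast+
  then show "s \<in> setscale {0<..} S" using P_char[OF assms] \<open>s \<in> S\<close> by simp
qed

lemma zero_notin_P:
  assumes "admissible_Phi \<Phi>" "S \<subseteq> unitS \<Phi>"
  shows "0 \<notin> setscale {0<..} S"
  using P_char[OF assms] by blast

lemma sconv_iff:
  assumes "admissible_Phi \<Phi>" "S \<subseteq> unitS \<Phi>" "S \<noteq> {}"
  shows "s_convex \<Phi> S \<longleftrightarrow>
    (\<forall>x\<in>S. \<forall>y\<in>S. \<forall>u\<ge>(0::real). \<forall>v\<ge>(0::real). u + v = 1 \<longrightarrow> u *\<^sub>R x + v *\<^sub>R y \<in> setscale {0<..} S)"
proof -
  have 0: "0 \<notin> S" using unit_nz assms by blast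
  have e: "rho \<Phi> z \<in> S \<longleftrightarrow> z \<in> setscale {0<..} S" for z
  proof (cases "z = 0")
    case True
    then show ?thesis using 0 zero_notin_P[OF assms(1,2)] by (simp add: rho_zero)
  next
    case False
    then show ?thesis using P_char[OF assms(1,2)] by simp
  qed
  have eq: "(\<forall>x\<in>S. \<forall>y\<in>S. \<forall>l\<in>{0..1}. s_comb \<Phi> l x y \<in> S) \<longleftrightarrow>
    (\<forall>x\<in>S. \<forall>y\<in>S. \<forall>u\<ge>(0::real). \<forall>v\<ge>(0::real). u + v = 1 \<longrightarrow> u *\<^sub>R x + v *\<^sub>R y \<in> setscale {0<..} S)"
    unfolding s_comb_def e
  proof (intro iffI ballI allI impI)
    fix x y and u v :: real assume h: "\<forall>x\<in>S. \<forall>y\<in>S. \<forall>l\<in>{0..1}. l *\<^sub>R x + (1 - l) *\<^sub>R y \<in> setscale {0<..} S"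
      "x \<in> S" "y \<in> S" "0 \<le> u" "0 \<le> v" "u + v = 1"
    then have "u \<in> {0..1}" "v = 1 - u" by auto
    then show "u *\<^sub>R x + v *\<^sub>R y \<in> setscale {0<..} S" using h(1,2,3) by simp
  next
    fix x y and l :: real assume h: "\<forall>x\<in>S. \<forall>y\<in>S. \<forall>u\<ge>(0::real). \<forall>v\<ge>(0::real). u + v = 1 \<longrightarrow> u *\<^sub>R x + v *\<^sub>R y \<in> setscale {0<..} S"
      "x \<in> S" "y \<in> S" "l \<in> {0..1}"
    then show "l *\<^sub>R x + (1 - l) *\<^sub>R y \<in> setscale {0<..} S" by simp
  qed
  have d: "s_convex \<Phi> S = (S \<noteq> {} \<and> S \<subseteq> unitS \<Phi> \<and> (\<forall>x\<in>S. \<forall>y\<in>S. \<forall>l\<in>{0..1}. s_comb \<Phi> l x y \<in> S))"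
    by (rule s_convex_def)
  show ?thesis unfolding d eq[symmetric] using assms(2,3) by (simp only: simp_thms not_False_eq_True)
qed


lemma P_elem:
  assumes "z \<in> setscale {0<..} S"
  obtains t s where "z = t *\<^sub>R s" "t > 0" "s \<in> S"
  using assms by (auto simp: setscale_def)

lemma convP_iff:
  assumes "admissible_Phi \<Phi>" "S \<subseteq> unitS \<Phi>"
  shows "convex (setscale {0<..} S) \<longleftrightarrow>
    (\<forall>x\<in>S. \<forall>y\<in>S. \<forall>u\<ge>(0::real). \<forall>v\<ge>(0::real). u + v = 1 \<longrightarrow> u *\<^sub>R x + v *\<^sub>R y \<in> setscale {0<..} S)"
proof
  assume "convex (setscale {0<..} S)"
  then show "\<forall>x\<in>S. \<forall>y\<in>S. \<forall>u\<ge>(0::real). \<forall>v\<ge>(0::real). u + v = 1 \<longrightarrow> u *\<^sub>R x + v *\<^sub>R y \<in> setscale {0<..} S"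
    using S_sub_P[OF assms] by (meson convexD subsetD)
next
  assume A: "\<forall>x\<in>S. \<forall>y\<in>S. \<forall>u\<ge>(0::real). \<forall>v\<ge>(0::real). u + v = 1 \<longrightarrow> u *\<^sub>R x + v *\<^sub>R y \<in> setscale {0<..} S"
  show "convex (setscale {0<..} S)"
  proof (rule convexI)
    fix a b and u v :: real
    assume h: "a \<in> setscale {0<..} S" "b \<in> setscale {0<..} S" "0 \<le> u" "0 \<le> v" "u + v = 1"
    obtain t1 x where a: "a = t1 *\<^sub>R x" "t1 > 0" "x \<in> S" using h(1) by (rule P_elem)
    obtain t2 y where b: "b = t2 *\<^sub>R y" "t2 > 0" "y \<in> S" using h(2) by (rule P_elem)
    define k where "k = u * t1 + v * t2"
    have k: "k > 0" unfolding k_def using h a b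
      by (smt (verit) mult_nonneg_nonneg mult_pos_pos)
    have "(u * t1 / k) *\<^sub>R x + (v * t2 / k) *\<^sub>R y \<in> setscale {0<..} S"
      using A a b h k by (simp add: k_def add_divide_distrib[symmetric])
    then have "k *\<^sub>R ((u * t1 / k) *\<^sub>R x + (v * t2 / k) *\<^sub>R y) \<in> setscale {0<..} S"
      using P_scale[OF assms k] by blast
    moreover have "k *\<^sub>R ((u * t1 / k) *\<^sub>R x + (v * t2 / k) *\<^sub>R y) = u *\<^sub>R a + v *\<^sub>R b"
      using k a b by (simp add: scaleR_add_right)
    ultimately show "u *\<^sub>R a + v *\<^sub>R b \<in> setscale {0<..} S" by simp
  qed
qed

lemma add_iff:
  assumes "admissible_Phi \<Phi>" "S \<subseteq> unitS \<Phi>"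
  shows "(\<forall>x1\<in>setscale {0<..} S. \<forall>x2\<in>setscale {0<..} S. x1 + x2 \<in> setscale {0<..} S)
     \<longleftrightarrow> convex (setscale {0<..} S)"
proof
  assume A: "\<forall>x1\<in>setscale {0<..} S. \<forall>x2\<in>setscale {0<..} S. x1 + x2 \<in> setscale {0<..} S"
  show "convex (setscale {0<..} S)"
  proof (rule convexI)
    fix a b and u v :: real
    assume h: "a \<in> setscale {0<..} S" "b \<in> setscale {0<..} S" "0 \<le> u" "0 \<le> v" "u + v = 1"
    show "u *\<^sub>R a + v *\<^sub>R b \<in> setscale {0<..} S"
    proof (cases "u = 0")
      case True then show ?thesis using h by simp
    next
      case u: False
      show ?thesis
      proof (cases "v = 0")
        case True then show ?thesis using h by simp
      next
        case False
        then have "u *\<^sub>R a \<in> setscale {0<..} S" "v *\<^sub>R b \<in> setscale {0<..} S"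
          using u h P_scale[OF assms] by auto
        then show ?thesis using A by blast
      qed
    qed
  qed
next
  assume c: "convex (setscale {0<..} S)"
  show "\<forall>x1\<in>setscale {0<..} S. \<forall>x2\<in>setscale {0<..} S. x1 + x2 \<in> setscale {0<..} S"
  proof (intro ballI)
    fix x1 x2 assume h: "x1 \<in> setscale {0<..} S" "x2 \<in> setscale {0<..} S"
    have "(1/2::real) *\<^sub>R x1 + (1/2::real) *\<^sub>R x2 \<in> setscale {0<..} S"
      using convexD[OF c h] by simp
    then have "(2::real) *\<^sub>R ((1/2::real) *\<^sub>R x1 + (1/2::real) *\<^sub>R x2) \<in> setscale {0<..} S"
      using P_scale[OF assms] by simp
    then show "x1 + x2 \<in> setscale {0<..} S" by (simp add: scaleR_add_right)
  qed
qed


lemma R_eq: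
  assumes "S \<noteq> {}"
  shows "setscale {0..} S = insert 0 (setscale {0<..} S)"
proof
  show "setscale {0..} S \<subseteq> insert 0 (setscale {0<..} S)"
    by (auto simp: setscale_def less_eq_real_def)
  obtain s where "s \<in> S" using assms by blast
  then have "0 \<in> setscale {0..} S" unfolding setscale_def
    by (smt (verit, best) atLeast_iff mem_Collect_eq scale_zero_left)
  then show "insert 0 (setscale {0<..} S) \<subseteq> setscale {0..} S"
    unfolding setscale_def using less_imp_le by fastforce
qed

lemma iv_iff:
  assumes "admissible_Phi \<Phi>" "S \<subseteq> unitS \<Phi>"
  shows "(pointed_cone (insert 0 (setscale {0<..} S)) \<and> convex (insert 0 (setscale {0<..} S)))
     \<longleftrightarrow> convex (setscale {0<..} S)"
proof
  let ?P = "setscale {0<..} S"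
  let ?K = "insert 0 ?P"
  assume h: "pointed_cone ?K \<and> convex ?K"
  show "convex ?P"
  proof (rule convexI)
    fix a b and u v :: real
    assume hh: "a \<in> ?P" "b \<in> ?P" "0 \<le> u" "0 \<le> v" "u + v = 1"
    show "u *\<^sub>R a + v *\<^sub>R b \<in> ?P"
    proof (cases "u = 0 \<or> v = 0")
      case True then show ?thesis using hh by auto
    next
      case False
      then have uv: "u > 0" "v > 0" using hh by auto
      have ua: "u *\<^sub>R a \<in> ?P" "v *\<^sub>R b \<in> ?P" using uv hh P_scale[OF assms] by auto
      have z: "u *\<^sub>R a + v *\<^sub>R b \<in> ?K" using h hh convexD[of ?K a b u v] by auto
      show ?thesis
      proof (rule ccontr)
        assume n: "u *\<^sub>R a + v *\<^sub>R b \<notin> ?P"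
        then have "u *\<^sub>R a + v *\<^sub>R b = 0" using z by auto
        then have e: "u *\<^sub>R a = - (v *\<^sub>R b)" by (simp add: eq_neg_iff_add_eq_0)
        have "u *\<^sub>R a \<in> ?K \<inter> uminus ` ?K" using ua e by auto
        then have "u *\<^sub>R a = 0" using h unfolding pointed_cone_def by blast
        then show False using ua zero_notin_P[OF assms] by auto
      qed
    qed
  qed
next
  let ?P = "setscale {0<..} S"
  let ?K = "insert 0 ?P"
  assume c: "convex ?P"
  have add: "\<forall>x1\<in>?P. \<forall>x2\<in>?P. x1 + x2 \<in> ?P" using add_iff[OF assms] c by blast
  have cone: "cone ?K" unfolding cone_def
  proof (intro ballI allI impI)
    fix x and c :: real assume "x \<in> ?K" "c \<ge> 0"
    then show "c *\<^sub>R x \<in> ?K" using P_scale[OF assms, of c x]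
      by (cases "c = 0") auto
  qed
  have pt: "?K \<inter> uminus ` ?K = {0}"
  proof
    show "{0} \<subseteq> ?K \<inter> uminus ` ?K" by force
    show "?K \<inter> uminus ` ?K \<subseteq> {0}"
    proof
      fix z assume z: "z \<in> ?K \<inter> uminus ` ?K"
      show "z \<in> {0}"
      proof (rule ccontr)
        assume "z \<notin> {0}"
        then have nz: "z \<noteq> 0" by simp
        obtain w where w: "w \<in> ?K" "z = - w" using z by auto
        have "z \<in> ?P" "w \<in> ?P" using z w nz by auto
        then have "z + w \<in> ?P" using add by blast
        then show False using w zero_notin_P[OF assms] by simp
      qed
    qed
  qed
  have cvx: "convex ?K"
  proof (rule convexI)
    fix a b and u v :: real
    assume hh: "a \<in> ?K" "b \<in> ?K" "0 \<le> u" "0 \<le> v" "u + v = 1"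
    show "u *\<^sub>R a + v *\<^sub>R b \<in> ?K"
    proof (cases "a = 0")
      case a0: True
      show ?thesis
      proof (cases "b = 0")
        case True then show ?thesis using a0 by simp
      next
        case False
        then show ?thesis using a0 hh P_scale[OF assms, of v b]
          by (cases "v = 0") (auto simp: less_eq_real_def)
      qed
    next
      case a0: False
      show ?thesis
      proof (cases "b = 0")
        case True then show ?thesis using a0 hh P_scale[OF assms, of u a]
          by (cases "u = 0") (auto simp: less_eq_real_def)
      next
        case False
        then show ?thesis using a0 hh convexD[OF c, of a b u v] by auto
      qed
    qed
  qed
  show "pointed_cone ?K \<and> convex ?K" using cone pt cvx unfolding pointed_cone_def by blast
qed

lemma v_iff:
  assumes "admissible_Phi \<Phi>" "S \<subseteq> unitS \<Phi>"
  shows "(\<exists>K. pointed_cone K \<and> convex K \<and> S = K \<inter> unitS \<Phi>) \<longleftrightarrow> convex (setscale {0<..} S)"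
proof
  let ?P = "setscale {0<..} S"
  assume "\<exists>K. pointed_cone K \<and> convex K \<and> S = K \<inter> unitS \<Phi>"
  then obtain K where K: "pointed_cone K" "convex K" "S = K \<inter> unitS \<Phi>" by blast
  have A: "\<forall>x\<in>S. \<forall>y\<in>S. \<forall>u\<ge>(0::real). \<forall>v\<ge>(0::real). u + v = 1 \<longrightarrow> u *\<^sub>R x + v *\<^sub>R y \<in> ?P"
  proof (intro ballI allI impI)
    fix x y and u v :: real
    assume hh: "x \<in> S" "y \<in> S" "0 \<le> u" "0 \<le> v" "u + v = 1"
    have xK: "x \<in> K" "y \<in> K" using hh K by auto
    have zK: "u *\<^sub>R x + v *\<^sub>R y \<in> K" using convexD[OF K(2) xK hh(3-5)] .
    have nz: "u *\<^sub>R x + v *\<^sub>R y \<noteq> 0"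
    proof (cases "u = 0 \<or> v = 0")
      case True then show ?thesis using hh unit_nz[OF assms(1)] assms(2) by auto
    next
      case False
      then have uv: "u > 0" "v > 0" using hh by auto
      show ?thesis
      proof
        assume "u *\<^sub>R x + v *\<^sub>R y = 0"
        then have e: "u *\<^sub>R x = - (v *\<^sub>R y)" by (simp add: eq_neg_iff_add_eq_0)
        have "u *\<^sub>R x \<in> K" "v *\<^sub>R y \<in> K" using K(1) xK uv unfolding pointed_cone_def cone_def by auto
        then have "u *\<^sub>R x \<in> K \<inter> uminus ` K" using e by auto
        then have "u *\<^sub>R x = 0" using K(1) unfolding pointed_cone_def by blast
        then show False using uv hh unit_nz[OF assms(1)] assms(2) by auto
      qed
    qed
    have "rho \<Phi> (u *\<^sub>R x + v *\<^sub>R y) \<in> K" using zK K(1) nz adm_pos[OF assms(1) nz]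
      unfolding pointed_cone_def cone_def rho_def by simp
    moreover have "rho \<Phi> (u *\<^sub>R x + v *\<^sub>R y) \<in> unitS \<Phi>" using rho_decomp[OF assms(1) nz] by blast
    ultimately have "rho \<Phi> (u *\<^sub>R x + v *\<^sub>R y) \<in> S" using K(3) by blast
    then show "u *\<^sub>R x + v *\<^sub>R y \<in> ?P" using P_char[OF assms] nz by blast
  qed
  then show "convex ?P" using convP_iff[OF assms] by blast
next
  let ?P = "setscale {0<..} S"
  assume c: "convex ?P"
  have K: "pointed_cone (insert 0 ?P)" "convex (insert 0 ?P)" using iv_iff[OF assms] c by blast+
  have "S = insert 0 ?P \<inter> unitS \<Phi>"
  proof
    show "S \<subseteq> insert 0 ?P \<inter> unitS \<Phi>" using S_sub_P[OF assms] assms(2) by blast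
    show "insert 0 ?P \<inter> unitS \<Phi> \<subseteq> S"
    proof
      fix z assume z: "z \<in> insert 0 ?P \<inter> unitS \<Phi>"
      then have nz: "z \<noteq> 0" using unit_nz[OF assms(1)] by blast
      then have zP: "z \<in> ?P" using z by blast
      have "\<Phi> z = 1" using z by (simp add: unitS_def)
      then have "rho \<Phi> z = z" using nz by (simp add: rho_def)
      then show "z \<in> S" using zP P_char[OF assms] by metis
    qed
  qed
  then show "\<exists>K. pointed_cone K \<and> convex K \<and> S = K \<inter> unitS \<Phi>" using K by blast
qed


lemma vi_imp:
  assumes "admissible_Phi \<Phi>" "S \<subseteq> unitS \<Phi>" "convex C" "S = rho \<Phi> ` C"
  shows "convex (setscale {0<..} S)"
proof -
  let ?P = "setscale {0<..} S"
  have 0: "0 \<notin> C"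
  proof
    assume "0 \<in> C"
    then have "0 \<in> S" using assms(4) rho_zero by force
    then show False using unit_nz[OF assms(1)] assms(2) by blast
  qed
  have A: "\<forall>x\<in>S. \<forall>y\<in>S. \<forall>u\<ge>(0::real). \<forall>v\<ge>(0::real). u + v = 1 \<longrightarrow> u *\<^sub>R x + v *\<^sub>R y \<in> ?P"
  proof (intro ballI allI impI)
    fix x y and u v :: real
    assume hh: "x \<in> S" "y \<in> S" "0 \<le> u" "0 \<le> v" "u + v = 1"
    obtain c1 where c1: "c1 \<in> C" "x = rho \<Phi> c1" using hh assms(4) by blast
    obtain c2 where c2: "c2 \<in> C" "y = rho \<Phi> c2" using hh assms(4) by blast
    have nz: "c1 \<noteq> 0" "c2 \<noteq> 0" using c1 c2 0 by auto
    define a where "a = \<Phi> c1"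
    define b where "b = \<Phi> c2"
    have ab: "a > 0" "b > 0" using adm_pos[OF assms(1)] nz a_def b_def by auto
    have xy: "x = (1/a) *\<^sub>R c1" "y = (1/b) *\<^sub>R c2" using c1 c2 nz by (auto simp: rho_def a_def b_def)
    define k where "k = u / a + v / b"
    have k: "k > 0" unfolding k_def using hh ab
      by (smt (verit) divide_nonneg_pos divide_pos_pos)
    define w where "w = (u / a / k) *\<^sub>R c1 + (v / b / k) *\<^sub>R c2"
    have "(u / a / k) + (v / b / k) = (u / a + v / b) / k" by (simp add: add_divide_distrib)
    also have "\<dots> = 1" using k unfolding k_def by simp
    finally have "(u / a / k) + (v / b / k) = 1" .
    then have wC: "w \<in> C" unfolding w_def using convexD[OF assms(3) c1(1) c2(1)] hh ab k by simp
    then have wnz: "w \<noteq> 0" using 0 by auto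
    have "rho \<Phi> w \<in> S" using wC assms(4) by blast
    then have "w \<in> ?P" using P_char[OF assms(1,2)] wnz by blast
    then have "k *\<^sub>R w \<in> ?P" using P_scale[OF assms(1,2) k] by blast
    moreover have "k *\<^sub>R w = u *\<^sub>R x + v *\<^sub>R y" using k unfolding w_def xy
      by (simp add: scaleR_add_right)
    ultimately show "u *\<^sub>R x + v *\<^sub>R y \<in> ?P" by simp
  qed
  then show ?thesis using convP_iff[OF assms(1,2)] by blast
qed

lemma viii_of:
  assumes "admissible_Phi \<Phi>" "S \<subseteq> unitS \<Phi>" "convex (setscale {0<..} S)"
  shows "S = rho \<Phi> ` (convex hull S)"
proof
  have "convex hull S \<subseteq> setscale {0<..} S"
    using hull_minimal[where S=convex, OF S_sub_P[OF assms(1,2)] assms(3)] .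
  then show "rho \<Phi> ` (convex hull S) \<subseteq> S" using P_char[OF assms(1,2)] by blast
  show "S \<subseteq> rho \<Phi> ` (convex hull S)"
  proof
    fix s assume "s \<in> S"
    then have "s = rho \<Phi> s" "s \<in> convex hull S" using rho_unitS[OF assms(1)] assms(2) hull_inc[of s S convex] by auto
    then show "s \<in> rho \<Phi> ` (convex hull S)" by blast
  qed
qed

lemma bounded_unitS:
  assumes "admissible_Phi \<Phi>"
  shows "bounded (unitS (\<Phi>::'a::euclidean_space \<Rightarrow> real))"
proof -
  obtain e :: 'a where e: "e \<in> Basis" using nonempty_Basis by blast
  have ne: "sphere (0::'a) 1 \<noteq> {}" using e by (auto simp: dist_norm)
  have cont: "continuous_on (sphere 0 1) \<Phi>" using assms unfolding admissible_Phi_def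
    using continuous_on_subset by blast
  obtain u where u: "u \<in> sphere 0 1" "\<forall>y\<in>sphere 0 1. \<Phi> u \<le> \<Phi> y"
    using continuous_attains_inf[OF compact_sphere ne cont] by blast
  have unz: "u \<noteq> 0" using u by auto
  define m where "m = \<Phi> u"
  have m: "m > 0" using adm_pos[OF assms unz] m_def by simp
  have "\<forall>x\<in>unitS \<Phi>. norm x \<le> 1 / m"
  proof
    fix x assume x: "x \<in> unitS \<Phi>"
    then have xnz: "x \<noteq> 0" using unit_nz[OF assms] by blast
    let ?y = "(1 / norm x) *\<^sub>R x"
    have "?y \<in> sphere 0 1" using xnz by simp
    then have "m \<le> \<Phi> ?y" using u m_def by blast
    also have "\<Phi> ?y = 1 / norm x" using adm_hom[OF assms, of "1 / norm x" x] x by (simp add: unitS_def)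
    finally have "m \<le> 1 / norm x" .
    then show "norm x \<le> 1 / m" using m xnz
      by (simp add: field_simps)
  qed
  then show ?thesis unfolding bounded_iff by blast
qed

lemma ix_char:
  assumes "admissible_Phi \<Phi>" "S \<subseteq> unitS \<Phi>"
  shows "z \<in> setscale {0<..1} S \<longleftrightarrow> z \<in> setscale {0<..} S \<and> \<Phi> z \<le> 1"
proof
  assume "z \<in> setscale {0<..1} S"
  then obtain t s where z: "z = t *\<^sub>R s" "0 < t" "t \<le> 1" "s \<in> S" by (auto simp: setscale_def)
  have "\<Phi> z = t" using z adm_hom[OF assms(1), of t s] assms(2) by (auto simp: unitS_def)
  moreover have "z \<in> setscale {0<..} S" using z by (auto simp: setscale_def)
  ultimately show "z \<in> setscale {0<..} S \<and> \<Phi> z \<le> 1" using z by simp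
next
  assume h: "z \<in> setscale {0<..} S \<and> \<Phi> z \<le> 1"
  then have nz: "z \<noteq> 0" "rho \<Phi> z \<in> S" using P_char[OF assms] by blast+
  have "z = \<Phi> z *\<^sub>R rho \<Phi> z" "\<Phi> z > 0" using rho_decomp[OF assms(1) nz(1)] adm_pos[OF assms(1) nz(1)] by auto
  then show "z \<in> setscale {0<..1} S" using h nz unfolding setscale_def by force
qed

lemma ix_iff:
  assumes "admissible_Phi \<Phi>" "S \<subseteq> unitS \<Phi>" "convex_on UNIV \<Phi>"
  shows "convex (setscale {0<..1} S) \<longleftrightarrow> convex (setscale {0<..} S)"
proof
  let ?P = "setscale {0<..} S"
  let ?Q = "setscale {0<..1} S"
  assume c: "convex ?Q"
  have SQ: "S \<subseteq> ?Q"
  proof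
    fix x assume x: "x \<in> S"
    then have "x \<in> ?P" using S_sub_P[OF assms(1,2)] by blast
    moreover have "\<Phi> x = 1" using x assms(2) by (auto simp: unitS_def)
    ultimately show "x \<in> ?Q" using ix_char[OF assms(1,2)] by simp
  qed
  have "\<forall>x\<in>S. \<forall>y\<in>S. \<forall>u\<ge>(0::real). \<forall>v\<ge>(0::real). u + v = 1 \<longrightarrow> u *\<^sub>R x + v *\<^sub>R y \<in> ?P"
    using convexD[OF c] SQ ix_char[OF assms(1,2)] by (meson subsetD)
  then show "convex ?P" using convP_iff[OF assms(1,2)] by blast
next
  let ?P = "setscale {0<..} S"
  let ?Q = "setscale {0<..1} S"
  assume c: "convex ?P"
  have lv: "convex {z. \<Phi> z \<le> 1}"
  proof (rule convexI)
    fix x y and u v :: real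
    assume hh: "x \<in> {z. \<Phi> z \<le> 1}" "y \<in> {z. \<Phi> z \<le> 1}" "0 \<le> u" "0 \<le> v" "u + v = 1"
    have "\<Phi> ((1 - v) *\<^sub>R x + v *\<^sub>R y) \<le> (1 - v) * \<Phi> x + v * \<Phi> y"
      using convex_onD[OF assms(3), of v x y] hh by auto
    moreover have "(1 - v) * \<Phi> x + v * \<Phi> y \<le> (1 - v) * 1 + v * 1"
      using hh by (intro add_mono mult_left_mono) auto
    moreover have "u = 1 - v" using hh by simp
    ultimately show "u *\<^sub>R x + v *\<^sub>R y \<in> {z. \<Phi> z \<le> 1}" by simp
  qed
  have "?Q = ?P \<inter> {z. \<Phi> z \<le> 1}" using ix_char[OF assms(1,2)] by blast
  then show "convex ?Q" using convex_Int[OF c lv] by simp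
qed

theorem proposition1:
  fixes \<Phi> :: "'a::euclidean_space \<Rightarrow> real" and S :: "'a set"
  assumes "DIM('a) \<ge> 2"
    and "admissible_Phi \<Phi>"
    and "S \<noteq> {}" and "S \<subseteq> unitS \<Phi>"
  shows "(s_convex \<Phi> S \<longleftrightarrow>
            (\<forall>x1\<in>setscale {0<..} S. \<forall>x2\<in>setscale {0<..} S. x1 + x2 \<in> setscale {0<..} S))
       \<and> (s_convex \<Phi> S \<longleftrightarrow> convex (setscale {0<..} S))
       \<and> (s_convex \<Phi> S \<longleftrightarrow> pointed_cone (setscale {0..} S) \<and> convex (setscale {0..} S))
       \<and> (s_convex \<Phi> S \<longleftrightarrow>
            (\<exists>K. pointed_cone K \<and> convex K \<and> S = K \<inter> unitS \<Phi>))
       \<and> (s_convex \<Phi> S \<longleftrightarrow> (\<exists>C. convex C \<and> S = rho \<Phi> ` C))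
       \<and> (s_convex \<Phi> S \<longleftrightarrow> (\<exists>C. bounded C \<and> convex C \<and> S = rho \<Phi> ` C))
       \<and> (s_convex \<Phi> S \<longleftrightarrow> S = rho \<Phi> ` (convex hull S))
       \<and> (convex_on UNIV \<Phi> \<longrightarrow> (s_convex \<Phi> S \<longleftrightarrow> convex (setscale {0<..1} S)))"
proof -
  let ?P = "setscale {0<..} S"
  note a = assms(2,4)
  have E: "s_convex \<Phi> S \<longleftrightarrow> convex ?P"
    using sconv_iff[OF assms(2,4,3)] convP_iff[OF a] by blast
  have hb: "bounded (convex hull S)"
    using bounded_convex_hull bounded_subset[OF bounded_unitS[OF assms(2)] assms(4)] by blast
  have vi: "s_convex \<Phi> S \<longleftrightarrow> (\<exists>C. convex C \<and> S = rho \<Phi> ` C)"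
    using E viii_of[OF a] vi_imp[OF a] convex_convex_hull by metis
  have vii: "s_convex \<Phi> S \<longleftrightarrow> (\<exists>C. bounded C \<and> convex C \<and> S = rho \<Phi> ` C)"
    using E viii_of[OF a] vi_imp[OF a] convex_convex_hull hb by metis
  have viii: "s_convex \<Phi> S \<longleftrightarrow> S = rho \<Phi> ` (convex hull S)"
    using E viii_of[OF a] vi_imp[OF a] convex_convex_hull by metis
  have iv: "s_convex \<Phi> S \<longleftrightarrow> pointed_cone (setscale {0..} S) \<and> convex (setscale {0..} S)"
    using E iv_iff[OF a] R_eq[OF assms(3)] by simp
  have ix: "convex_on UNIV \<Phi> \<longrightarrow> (s_convex \<Phi> S \<longleftrightarrow> convex (setscale {0<..1} S))"
    using E ix_iff[OF a] by blast
  show ?thesis using E add_iff[OF a] v_iff[OF a] vi vii viii iv ix by blast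
qed

end
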